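(* Fix $N\in\mathbb{N}$ and $\sigma^2>0$, and put $c_{\sigma^2}(t)=\sigma^2/(\sigma^2+t)$ for $t\in[0,\infty)$. (i) Let $(\Xi(t))_{t\ge 0}$ be the noncolliding Brownian motion whose initial configuration is random with density $\mu^{(1)}_{N,\sigma^2}$. Let $(\Xi_{\sigma^2}(t))_{t\in[0,\sigma^2]}$ be the noncolliding Brownian motion with duration $T=\sigma^2$ started from $N\delta_0$. Then the following two processes are equivalent, i.e. they have the same finite-dimensional distributions: $$(\Xi(t))_{t\ge0}\qquad\text{and}\qquad \Big(\tfrac{1}{c_{\sigma^2}(t)}\circ \Xi_{\sigma^2}\big(\sigma^2 c_{\sigma^2}(t)\big)\Big)_{t\ge 0}.$$ (ii) Let $\nu>-1$, $a\in(-1,\nu]$ and $\kappa=2(\nu-a)$, so that $a=\nu-\kappa/2$. Let $(\Xi^{(\nu)}(t))_{t\ge0}$ be the noncolliding squared Bessel process with index $\nu$ whose initial configuration is random with density $\mu^{(1,a)}_{N,\sigma^2}$. Let $(\Xi^{(\nu,\kappa)}_{\sigma^2}(t))_{t\in[0,\sigma^2]}$ be the noncolliding squared generalized meander with duration $T=\sigma^2$ started from $N\delta_0$. Then the following two processes are equivalent: $$(\Xi^{(\nu)}(t))_{t\ge0}\qquad\text{and}\qquad \Big(\tfrac{1}{c_{\sigma^2}(t)^2}\circ \Xi^{(\nu,\kappa)}_{\sigma^2}\big(\sigma^2 c_{\sigma^2}(t)\big)\Big)_{t\ge 0}.$$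
   Context: Configurations and notation. - A configuration of $N$ particles is $\xi=\sum_{j=1}^N\delta_{x_j}$; it is identified with the ordered vector $\mathbf{x}=(x_1,\dots,x_N)$. - For $c>0$ the dilatation is $c\circ\xi=\sum_j\delta_{cx_j}$, and $c\mathbf{x}=(cx_1,\dots,cx_N)$. - $\mathbb{W}_N^{A}=\{\mathbf{x}\in\mathbb{R}^N:x_1<\dots<x_N\}$ and $\mathbb{W}_N^{+}=\{\mathbf{x}:0\le x_1<\dots<x_N\}$. - $h_N(\mathbf{x})=\prod_{1\le j<k\le N}(x_k-x_j)$ and $|\mathbf{x}|^2=\sum_j x_j^2$. - Two processes with the same state space are equivalent if, for every $M$ and all times $0<t_1<\dots<t_M$, their multitime joint probability densities coincide. Transition densities. - Brownian motion: $p(t,y|x)=(2\pi t)^{-1/2}e^{-(x-y)^2/2t}$ for $t>0$, and $p(0,y|x)=\delta(y-x)$. - Squared Bessel process: for $t>0$, $$p^{(\nu)}(t,y|x)=\frac{1}{2t}\Big(\frac yx\Big)^{\nu/2}e^{-(x+y)/2t}I_\nu\Big(\frac{\sqrt{xy}}{t}\Big)\quad (x>0),\qquad p^{(\nu)}(t,y|0)=\frac{y^\nu e^{-y/2t}}{(2t)^{\nu+1}\Gamma(\nu+1)},$$ and $p^{(\nu)}(0,y|x)=\delta(y-x)$. Here $I_\nu(z)=\sum_{n\ge0}(z/2)^{2n+\nu}/\{\Gamma(n+1)\Gamma(n+1+\nu)\}$. - Generalized meander: for $t>0$, $$p^{(\nu,\kappa)}(t,y|x)=\frac{1}{2t}\Big(\frac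 yx\Big)^{(\nu-\kappa)/2}e^{-(x+y)/2t}I_\nu\Big(\frac{\sqrt{xy}}{t}\Big)\quad(x>0,\ y\ge0),\qquad p^{(\nu,\kappa)}(t,y|0)=\frac{y^{\nu-\kappa/2}e^{-y/2t}}{(2t)^{\nu+1}\Gamma(\nu+1)},$$ and $p^{(\nu,\kappa)}(0,y|x)=\delta(y-x)$. - Write $f(t,\mathbf{y}|\mathbf{x})=\det_{j,k}[p(t,y_j|x_k)]$, and define $f^{(\nu)}$ and $f^{(\nu,\kappa)}$ analogously from $p^{(\nu)}$ and $p^{(\nu,\kappa)}$. Noncolliding Brownian motion started from a fixed $\xi$ with $\mathbf{x}\in\mathbb{W}_N^A$. This is the temporally homogeneous process whose multitime joint density, for $0<t_1<\dots<t_M$ and $\mathbf{x}^{(m)}\in\mathbb{W}_N^A$, is $$p^\xi(t_1,\mathbf{x}^{(1)};\dots;t_M,\mathbf{x}^{(M)})=h_N(\mathbf{x}^{(M)})\prod_{m=1}^{M-1}f(t_{m+1}-t_m,\mathbf{x}^{(m+1)}|\mathbf{x}^{(m)})\,\frac{f(t_1,\mathbf{x}^{(1)}|\mathbf{x})}{h_N(\mathbf{x})}.$$ The noncolliding squared Bessel process with index $\nu$ ($\nu>-1$) started from $\mathbf{x}\in\mathbb{W}_N^+$ is defined by the same formula with $p,f$ replaced by $p^{(\nu)},f^{(\nu)}$ and $\mathbb{W}_N^A$ replaced by $\mathbb{W}_N^+$. Starting from a random initial configuration with density $\mu$ means mixing these densities against $\mu(\xi)\,d\mathbf{x}$. Initial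 distributions. - $\mu^{(1)}_{N,\sigma^2}(\xi)=\dfrac{\sigma^{-N(N+1)/2}}{C_N^{(1)}}e^{-|\mathbf{x}|^2/2\sigma^2}|h_N(\mathbf{x})|$ on $\mathbb{W}_N^A$, where $C_N^{(1)}=\dfrac{(2\pi)^{N/2}}{N!}\prod_{j=1}^N\dfrac{\Gamma(j/2+1)}{\Gamma(3/2)}$. This is the GOE eigenvalue density with variance $\sigma^2$. - $\mu^{(1,a)}_{N,\sigma^2}(\xi)=\dfrac{\sigma^{-N\{(N-1)+2(a+1)\}}}{C_N^{(1,a)}}\prod_{j=1}^N x_j^ae^{-x_j/2\sigma^2}\,|h_N(\mathbf{x})|$ on $\mathbb{W}_N^+$, where $C_N^{(1,a)}=\dfrac{2^{N\{(N-1)+2(a+1)\}/2}}{N!}\prod_{j=1}^N\dfrac{\Gamma(j/2+1)\Gamma(j/2+a+1/2)}{\Gamma(3/2)}$. Noncolliding Brownian motion with duration $T>0$ started from $N\delta_0$. This is the temporally inhomogeneous process on $[0,T]$ whose multitime density, for $0<t_1<\dots<t_M<t_{M+1}\equiv T$ and $\mathbf{x}^{(m)}\in\mathbb{W}_N^A$, is $$C_{N,T}(t_1)\,\mathrm{sgn}(h_N(\mathbf{x}^{(M+1)}))\prod_{m=1}^M f(t_{m+1}-t_m,\mathbf{x}^{(m+1)}|\mathbf{x}^{(m)})\,h_N(\mathbf{x}^{(1)})\prod_{j=1}^N p(t_1,x^{(1)}_j|0),$$ where $C_{N,T}(t)=\pi^{N/2}\{\prod_{j=1}^N\Gamma(j/2)\}^{-1}T^{N(N-1)/4}t^{-N(N-1)/2}$.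 Noncolliding squared generalized meander with duration $T$ started from $N\delta_0$ ($\nu>-1$, $\kappa\in[0,2(\nu+1))$). This is defined by the same formula with $p,f$ replaced by $p^{(\nu,\kappa)},f^{(\nu,\kappa)}$, with $\mathbb{W}_N^+$ in place of $\mathbb{W}_N^A$, and with constant $$C^{(\nu,\kappa)}_{N,T}(t)=\frac{T^{(N+\kappa-1)N/2}t^{-(N-1)N}}{2^{N(N-\kappa-1)/2}}\prod_{j=1}^N\frac{\Gamma(\nu+1)\Gamma(1/2)}{\Gamma(j/2)\Gamma((j+1+2\nu-\kappa)/2)}.$$ *)

theory Defs
  imports "HOL-Analysis.Analysis"
begin

text \<open>A configuration of N
  particles is an ordered vector x = (x_0,...,x_{N-1}), represented as a function
  nat => real whose relevant entries are those with index < N.  Multitime data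
  (M times, M configurations) are given as ts :: nat => real (ts m, m < M) and
  xs :: nat => nat => real (xs m = configuration at time ts m).\<close>

definition lebN :: "nat \<Rightarrow> (nat \<Rightarrow> real) measure" where
  "lebN N = PiM {..<N} (\<lambda>_. lborel)"

definition weylA :: "nat \<Rightarrow> (nat \<Rightarrow> real) set" where
  "weylA N = {x. \<forall>j. Suc j < N \<longrightarrow> x j < x (Suc j)}"

definition weylPlus :: "nat \<Rightarrow> (nat \<Rightarrow> real) set" where
  "weylPlus N = {x. 0 \<le> x 0 \<and> (\<forall>j. Suc j < N \<longrightarrow> x j < x (Suc j))}"

text \<open>Open positive chamber 0 < x_1 < ... < x_N (full-measure part of W_N^+).\<close>
definition weylPos :: "nat \<Rightarrow> (nat \<Rightarrow> real) set" where
  "weylPos N = {x. 0 < x 0 \<and> (\<forall>j. Suc j < N \<longrightarrow> x j < x (Suc j))}"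

definition vdm :: "nat \<Rightarrow> (nat \<Rightarrow> real) \<Rightarrow> real" where
  "vdm N x = (\<Prod>k<N. \<Prod>j<k. (x k - x j))"

definition sqnorm :: "nat \<Rightarrow> (nat \<Rightarrow> real) \<Rightarrow> real" where
  "sqnorm N x = (\<Sum>j<N. (x j)\<^sup>2)"

definition detN :: "nat \<Rightarrow> (nat \<Rightarrow> nat \<Rightarrow> real) \<Rightarrow> real" where
  "detN N A = (\<Sum>p | p permutes {..<N}. of_int (sign p) * (\<Prod>i<N. A i (p i)))"

definition besselI :: "real \<Rightarrow> real \<Rightarrow> real" where
  "besselI \<nu> z = (\<Sum>n. (z / 2) powr (2 * real n + \<nu>) / (Gamma (real n + 1) * Gamma (real n + 1 + \<nu>)))"

text \<open>Transition densities p(t,y|x), for t > 0.\<close>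
definition pBM :: "real \<Rightarrow> real \<Rightarrow> real \<Rightarrow> real" where
  "pBM t y x = exp (- (x - y)\<^sup>2 / (2 * t)) / sqrt (2 * pi * t)"

definition pBES :: "real \<Rightarrow> real \<Rightarrow> real \<Rightarrow> real \<Rightarrow> real" where
  "pBES \<nu> t y x =
     (if x = 0 then y powr \<nu> * exp (- y / (2 * t)) / ((2 * t) powr (\<nu> + 1) * Gamma (\<nu> + 1))
      else 1 / (2 * t) * (y / x) powr (\<nu> / 2) * exp (- (x + y) / (2 * t))
             * besselI \<nu> (sqrt (x * y) / t))"

definition pMEA :: "real \<Rightarrow> real \<Rightarrow> real \<Rightarrow> real \<Rightarrow> real \<Rightarrow> real" where
  "pMEA \<nu> \<kappa> t y x =
     (if x = 0 then y powr (\<nu> - \<kappa> / 2) * exp (- y / (2 * t)) / ((2 * t) powr (\<nu> + 1) * Gamma (\<nu> + 1))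
      else 1 / (2 * t) * (y / x) powr ((\<nu> - \<kappa>) / 2) * exp (- (x + y) / (2 * t))
             * besselI \<nu> (sqrt (x * y) / t))"

definition transDet :: "nat \<Rightarrow> (real \<Rightarrow> real \<Rightarrow> real \<Rightarrow> real) \<Rightarrow> real
                        \<Rightarrow> (nat \<Rightarrow> real) \<Rightarrow> (nat \<Rightarrow> real) \<Rightarrow> real" where
  "transDet N p t y x = detN N (\<lambda>j k. p t (y j) (x k))"

text \<open>Multitime density (times ts 0 < ... < ts (M-1), configurations xs 0, ..., xs (M-1))
  of the temporally homogeneous noncolliding process with kernel p started from the
  fixed configuration x.\<close>
definition homDensity :: "nat \<Rightarrow> (real \<Rightarrow> real \<Rightarrow> real \<Rightarrow> real) \<Rightarrow> nat \<Rightarrow> (nat \<Rightarrow> real)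
                          \<Rightarrow> (nat \<Rightarrow> nat \<Rightarrow> real) \<Rightarrow> (nat \<Rightarrow> real) \<Rightarrow> real" where
  "homDensity N p M ts xs x =
     vdm N (xs (M - 1))
     * (\<Prod>m<M - 1. transDet N p (ts (Suc m) - ts m) (xs (Suc m)) (xs m))
     * transDet N p (ts 0) (xs 0) x / vdm N x"

text \<open>Same process, random initial configuration with density mu on the chamber W.\<close>
definition mixedHomDensity :: "nat \<Rightarrow> (real \<Rightarrow> real \<Rightarrow> real \<Rightarrow> real) \<Rightarrow> (nat \<Rightarrow> real) set
          \<Rightarrow> ((nat \<Rightarrow> real) \<Rightarrow> real) \<Rightarrow> nat \<Rightarrow> (nat \<Rightarrow> real) \<Rightarrow> (nat \<Rightarrow> nat \<Rightarrow> real) \<Rightarrow> real" where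
  "mixedHomDensity N p W \<mu> M ts xs =
     (LINT x:W|lebN N. \<mu> x * homDensity N p M ts xs x)"

text \<open>Multitime density at times 0 < ts 0 < ... < ts (M-1) < T of the noncolliding process
  with duration T, kernel p, constant C, chamber W, started from N delta_0.  The last
  configuration x^(M+1) at the terminal time t_{M+1} = T is integrated out over W.\<close>
definition durDensity :: "nat \<Rightarrow> (real \<Rightarrow> real \<Rightarrow> real \<Rightarrow> real) \<Rightarrow> (real \<Rightarrow> real) \<Rightarrow> (nat \<Rightarrow> real) set
          \<Rightarrow> real \<Rightarrow> nat \<Rightarrow> (nat \<Rightarrow> real) \<Rightarrow> (nat \<Rightarrow> nat \<Rightarrow> real) \<Rightarrow> real" where
  "durDensity N p C W T M ts xs =
     C (ts 0) * (LINT z:W|lebN N.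
        sgn (vdm N z)
        * (\<Prod>m<M. transDet N p ((if Suc m < M then ts (Suc m) else T) - ts m)
                                  (if Suc m < M then xs (Suc m) else z) (xs m))
        * vdm N (xs 0) * (\<Prod>j<N. p (ts 0) (xs 0 j) 0))"

definition CBM :: "nat \<Rightarrow> real \<Rightarrow> real \<Rightarrow> real" where
  "CBM N T t = pi powr (real N / 2) / (\<Prod>j=1..N. Gamma (real j / 2))
               * T powr (real N * (real N - 1) / 4) * t powr (- (real N * (real N - 1) / 2))"

definition CMEA :: "nat \<Rightarrow> real \<Rightarrow> real \<Rightarrow> real \<Rightarrow> real \<Rightarrow> real" where
  "CMEA N \<nu> \<kappa> T t = T powr ((real N + \<kappa> - 1) * real N / 2) * t powr (- ((real N - 1) * real N))
        / 2 powr (real N * (real N - \<kappa> - 1) / 2)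
        * (\<Prod>j=1..N. Gamma (\<nu> + 1) * Gamma (1 / 2)
                      / (Gamma (real j / 2) * Gamma ((real j + 1 + 2 * \<nu> - \<kappa>) / 2)))"

definition CGOE :: "nat \<Rightarrow> real" where
  "CGOE N = (2 * pi) powr (real N / 2) / fact N
            * (\<Prod>j=1..N. Gamma (real j / 2 + 1) / Gamma (3 / 2))"

definition muGOE :: "nat \<Rightarrow> real \<Rightarrow> (nat \<Rightarrow> real) \<Rightarrow> real" where
  "muGOE N \<sigma>2 x = sqrt \<sigma>2 powr (- (real N * (real N + 1) / 2)) / CGOE N
                  * exp (- sqnorm N x / (2 * \<sigma>2)) * \<bar>vdm N x\<bar>"

definition CLOE :: "nat \<Rightarrow> real \<Rightarrow> real" where
  "CLOE N a = 2 powr (real N * ((real N - 1) + 2 * (a + 1)) / 2) / fact N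
              * (\<Prod>j=1..N. Gamma (real j / 2 + 1) * Gamma (real j / 2 + a + 1 / 2) / Gamma (3 / 2))"

definition muLOE :: "nat \<Rightarrow> real \<Rightarrow> real \<Rightarrow> (nat \<Rightarrow> real) \<Rightarrow> real" where
  "muLOE N \<sigma>2 a x = sqrt \<sigma>2 powr (- (real N * ((real N - 1) + 2 * (a + 1)))) / CLOE N a
                    * (\<Prod>j<N. x j powr a * exp (- x j / (2 * \<sigma>2))) * \<bar>vdm N x\<bar>"

definition cfun :: "real \<Rightarrow> real \<Rightarrow> real" where
  "cfun \<sigma>2 t = \<sigma>2 / (\<sigma>2 + t)"

text \<open>Multitime density of the process t |-> (1 / c(t)^k) o Y(sigma^2 c(t)), where Y has
  multitime density P (for increasing times).  Since s = sigma^2 c(t) is decreasing in t,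
  the times are reversed; y = c^k z in R^N has Jacobian c^(kN).\<close>
definition timeChangedDensity :: "nat \<Rightarrow> real \<Rightarrow> nat
     \<Rightarrow> (nat \<Rightarrow> (nat \<Rightarrow> real) \<Rightarrow> (nat \<Rightarrow> nat \<Rightarrow> real) \<Rightarrow> real)
     \<Rightarrow> nat \<Rightarrow> (nat \<Rightarrow> real) \<Rightarrow> (nat \<Rightarrow> nat \<Rightarrow> real) \<Rightarrow> real" where
  "timeChangedDensity N \<sigma>2 k P M ts xs =
     (\<Prod>m<M. cfun \<sigma>2 (ts m) ^ (k * N))
     * P M (\<lambda>m. \<sigma>2 * cfun \<sigma>2 (ts (M - 1 - m)))
           (\<lambda>m j. cfun \<sigma>2 (ts (M - 1 - m)) ^ k * xs (M - 1 - m) j)"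

end

theory Submission
  imports Defs
begin

lemma prod_perm_reindex:
  assumes p: "p permutes {..<N}"
  shows "(\<Prod>i<N. f (p i)) = (\<Prod>i<N. (f i :: real))"
  using prod.reindex_bij_betw[OF permutes_imp_bij[OF p], of f] by simp

lemma detN_transpose: "detN N (\<lambda>j k. A k j) = detN N A"
proof -
  have "detN N (\<lambda>j k. A k j) = (\<Sum>p | p permutes {..<N}. of_int (sign p) * (\<Prod>i<N. A (p i) i))"
    unfolding detN_def ..
  also have "\<dots> = (\<Sum>p | p permutes {..<N}. of_int (sign (inv p)) * (\<Prod>i<N. A (inv p i) i))"
    by (subst sum_permutations_inverse) simp
  also have "\<dots> = (\<Sum>p | p permutes {..<N}. of_int (sign p) * (\<Prod>i<N. A i (p i)))"
  proof (rule sum.cong[OF refl])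
    fix p assume "p \<in> {p. p permutes {..<N}}"
    hence p: "p permutes {..<N}" by simp
    have s: "sign (inv p) = sign p"
      by (metis sign_inverse finite_lessThan p permutation_permutes)
    have "(\<Prod>i<N. A (inv p i) i) = (\<Prod>i<N. A (inv p (p i)) (p i))"
      using prod_perm_reindex[OF p, of "\<lambda>i. A (inv p i) i"] by simp
    also have "\<dots> = (\<Prod>i<N. A i (p i))"
      using permutes_inverses(2)[OF p] by simp
    finally show "of_int (sign (inv p)) * (\<Prod>i<N. A (inv p i) i) = of_int (sign p) * (\<Prod>i<N. A i (p i))"
      using s by simp
  qed
  finally show ?thesis unfolding detN_def .
qed

lemma detN_scale:
  "detN N (\<lambda>j k. r j * s k * A j k) = (\<Prod>j<N. r j) * (\<Prod>k<N. s k) * detN N A"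
proof -
  have "detN N (\<lambda>j k. r j * s k * A j k) =
     (\<Sum>p | p permutes {..<N}. (\<Prod>j<N. r j) * (\<Prod>k<N. s k) * (of_int (sign p) * (\<Prod>i<N. A i (p i))))"
    unfolding detN_def
  proof (rule sum.cong[OF refl])
    fix p assume "p \<in> {p. p permutes {..<N}}"
    hence p: "p permutes {..<N}" by simp
    have "(\<Prod>i<N. r i * s (p i) * A i (p i)) = (\<Prod>i<N. r i) * (\<Prod>i<N. s (p i)) * (\<Prod>i<N. A i (p i))"
      by (simp add: prod.distrib)
    also have "(\<Prod>i<N. s (p i)) = (\<Prod>i<N. s i)" by (rule prod_perm_reindex[OF p])
    finally show "of_int (sign p) * (\<Prod>i<N. r i * s (p i) * A i (p i)) =
        (\<Prod>j<N. r j) * (\<Prod>k<N. s k) * (of_int (sign p) * (\<Prod>i<N. A i (p i)))"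
      by (simp add: ac_simps)
  qed
  also have "\<dots> = (\<Prod>j<N. r j) * (\<Prod>k<N. s k) * detN N A"
    unfolding detN_def by (simp add: sum_distrib_left)
  finally show ?thesis .
qed

lemma detN_cong:
  assumes "\<And>j k. j < N \<Longrightarrow> k < N \<Longrightarrow> A j k = B j k"
  shows "detN N A = detN N B"
  unfolding detN_def
proof (rule sum.cong[OF refl])
  fix p assume "p \<in> {p. p permutes {..<N}}"
  hence p: "p permutes {..<N}" by simp
  show "of_int (sign p) * (\<Prod>i<N. A i (p i)) = of_int (sign p) * (\<Prod>i<N. B i (p i))"
    using assms permutes_in_image[OF p] by (auto intro!: prod.cong)
qed

lemma Gamma_half_succ: "j \<ge> 1 \<Longrightarrow> Gamma (real j / 2 + 1) = (real j / 2) * Gamma (real j / 2)"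
  by (rule Gamma_plus1) (auto dest: nonpos_Ints_nonpos)

lemma Gamma_three_halves: "Gamma (3/2 :: real) = sqrt pi / 2"
proof -
  have "Gamma (3/2::real) = Gamma (1/2 + 1)" by simp
  also have "\<dots> = 1/2 * Gamma (1/2)" by (rule Gamma_plus1) (auto dest: nonpos_Ints_nonpos)
  finally show ?thesis by (simp add: Gamma_one_half_real)
qed

lemma GP: "(\<Prod>j=1..N. Gamma (real j / 2 + 1) / Gamma (3 / 2))
   = fact N * (\<Prod>j=1..N. Gamma (real j / 2)) / sqrt pi ^ N"
proof (induction N)
  case 0 then show ?case by simp
next
  case (Suc n)
  have "(\<Prod>j=1..Suc n. Gamma (real j / 2 + 1) / Gamma (3 / 2))
     = (\<Prod>j=1..n. Gamma (real j / 2 + 1) / Gamma (3 / 2)) * (Gamma (real (Suc n) / 2 + 1) / Gamma (3 / 2))"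
    by (simp add: prod.cl_ivl_Suc)
  also have "\<dots> = fact n * (\<Prod>j=1..n. Gamma (real j / 2)) / sqrt pi ^ n * (real (Suc n) * Gamma (real (Suc n) / 2) / sqrt pi)"
    using Suc Gamma_half_succ[of "Suc n"] by (simp add: Gamma_three_halves)
  also have "\<dots> = fact (Suc n) * (\<Prod>j=1..Suc n. Gamma (real j / 2)) / sqrt pi ^ Suc n"
    by (simp add: prod.cl_ivl_Suc field_simps)
  finally show ?case .
qed

lemma sqrt_pi_pow: "sqrt pi ^ N = pi powr (real N / 2)"
  by (simp add: powr_half_sqrt[symmetric] powr_realpow[symmetric] powr_powr)

lemma CGOE_eq: "CGOE N = 2 powr (real N / 2) * (\<Prod>j=1..N. Gamma (real j / 2))"
proof -
  have "CGOE N = (2 * pi) powr (real N / 2) / fact N * (fact N * (\<Prod>j=1..N. Gamma (real j / 2)) / sqrt pi ^ N)"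
    unfolding CGOE_def GP ..
  also have "\<dots> = 2 powr (real N / 2) * (\<Prod>j=1..N. Gamma (real j / 2))"
    by (simp add: powr_mult sqrt_pi_pow)
  finally show ?thesis .
qed

lemma CLOE_eq: "CLOE N a = 2 powr (real N * ((real N - 1) + 2 * (a + 1)) / 2)
    * (\<Prod>j=1..N. Gamma (real j / 2) * Gamma (real j / 2 + a + 1 / 2)) / sqrt pi ^ N"
proof -
  have "(\<Prod>j=1..N. Gamma (real j / 2 + 1) * Gamma (real j / 2 + a + 1 / 2) / Gamma (3 / 2))
      = (\<Prod>j=1..N. Gamma (real j / 2 + 1) / Gamma (3 / 2)) * (\<Prod>j=1..N. Gamma (real j / 2 + a + 1 / 2))"
    by (simp add: prod.distrib[symmetric] field_simps)
  also have "\<dots> = fact N * (\<Prod>j=1..N. Gamma (real j / 2) * Gamma (real j / 2 + a + 1 / 2)) / sqrt pi ^ N"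
    unfolding GP by (simp add: prod.distrib)
  finally have e: "(\<Prod>j=1..N. Gamma (real j / 2 + 1) * Gamma (real j / 2 + a + 1 / 2) / Gamma (3 / 2)) = \<dots>" .
  show ?thesis unfolding CLOE_def e by simp
qed

lemma expo_BM:
  fixes s t t' y y' :: real
  assumes s: "s > 0" and t: "0 < t" "t < t'"
  shows "- ((s/(s+t')) * y' - (s/(s+t)) * y)\<^sup>2 / (2 * ((s/(s+t)) * (s/(s+t')) * (t' - t)))
       = - (y - y')\<^sup>2 / (2 * (t' - t)) + (- y\<^sup>2 / (2 * (s + t)) + y'\<^sup>2 / (2 * (s + t')))"
proof -
  have "s+t \<noteq> 0" "s+t'\<noteq>0" "t'-t \<noteq> 0" using assms by auto
  then show ?thesis using assms
  apply (simp add: divide_simps power2_eq_square)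
  apply algebra
  done
qed

lemma exp_split3: "exp (A + (B - C)) / (P * Q) = exp A / P * (exp B / exp C) / (Q::real)"
  by (simp add: exp_add exp_diff)

lemma exp_split3': "exp (A + B - C) / (P * Q) = exp A * (exp B / P) / exp C / (Q::real)"
  by (simp add: exp_add exp_diff)

lemma sqrt_split: "sqrt (2*pi*(C*D)) = sqrt (2*pi*D) * sqrt (C::real)"
  by (metis real_sqrt_mult mult.commute mult.assoc)

lemma solve_aux: "X = P * (A / B) / Q \<Longrightarrow> A > 0 \<Longrightarrow> B > 0 \<Longrightarrow> Q > 0 \<Longrightarrow> P = Q * (B / A) * (X::real)"
  by (simp add: field_simps)

lemma solve_aux2: "X = A * P / B / Q \<Longrightarrow> A > 0 \<Longrightarrow> B > 0 \<Longrightarrow> Q > 0 \<Longrightarrow> A * P = Q * B * (X::real)"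
  by (simp add: field_simps)

lemma tau_eq:
  fixes s t t' :: real
  assumes s: "s > 0" and t: "0 < t" "t < t'"
  shows "s * (s/(s+t)) - s * (s/(s+t')) = (s/(s+t)) * (s/(s+t')) * (t' - t)"
  using assms by (simp add: field_simps)

lemma pBM_trans:
  fixes s t t' y y' :: real
  assumes s: "s > 0" and t: "0 < t" "t < t'"
  shows "pBM (t' - t) y' y = sqrt (cfun s t * cfun s t')
     * (exp (- y'\<^sup>2 / (2 * (s + t'))) / exp (- y\<^sup>2 / (2 * (s + t))))
     * pBM (s * cfun s t - s * cfun s t') (cfun s t * y) (cfun s t' * y')"
proof -
  let ?c = "s/(s+t)" and ?c' = "s/(s+t')"
  let ?E0 = "- (y - y')\<^sup>2 / (2 * (t' - t))" and ?a = "- y\<^sup>2 / (2 * (s + t))" and ?b = "- y'\<^sup>2 / (2 * (s + t'))"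
  have cp: "?c > 0" "?c' > 0" using assms by auto
  have "pBM (s * cfun s t - s * cfun s t') (cfun s t * y) (cfun s t' * y')
      = exp (?E0 + (?a - ?b)) / sqrt (2 * pi * (?c * ?c' * (t' - t)))"
    unfolding pBM_def cfun_def tau_eq[OF assms] expo_BM[OF assms] by simp
  also have "\<dots> = exp ?E0 / sqrt (2 * pi * (t' - t)) * (exp ?a / exp ?b) / sqrt (?c * ?c')"
    unfolding sqrt_split exp_split3 ..
  also have "\<dots> = pBM (t' - t) y' y * (exp ?a / exp ?b) / sqrt (?c * ?c')"
    unfolding pBM_def by simp
  finally have "pBM (s * cfun s t - s * cfun s t') (cfun s t * y) (cfun s t' * y') = \<dots>" .
  from solve_aux[OF this _ _ real_sqrt_gt_zero[OF mult_pos_pos[OF cp]]] show ?thesis unfolding cfun_def by simp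
qed

lemma pBM_init:
  fixes s t x y :: real
  assumes s: "s > 0" and t: "0 < t"
  shows "exp (- x\<^sup>2 / (2 * s)) * pBM t y x = sqrt (cfun s t) * exp (- y\<^sup>2 / (2 * (s + t)))
     * pBM (s - s * cfun s t) x (cfun s t * y)"
proof -
  let ?c = "s/(s+t)"
  have e1: "s - s * ?c = ?c * t" using assms by (simp add: field_simps)
  have e2: "- (?c * y - x)\<^sup>2 / (2 * (?c * t)) = - x\<^sup>2 / (2 * s) + - (x - y)\<^sup>2 / (2 * t) + y\<^sup>2 / (2 * (s + t))"
  proof -
    have "s+t \<noteq> 0" using assms by simp
    then show ?thesis using assms
      apply (simp add: divide_simps power2_eq_square)
      apply algebra
      done
  qed
  have cp: "?c > 0" using assms by auto
  let ?a = "- x\<^sup>2 / (2 * s)" and ?b = "- (x - y)\<^sup>2 / (2 * t)" and ?d = "- y\<^sup>2 / (2 * (s + t))"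
  have "pBM (s - s * cfun s t) x (cfun s t * y) = exp (?a + ?b - ?d) / sqrt (2 * pi * (?c * t))"
    unfolding pBM_def cfun_def e1 e2 by simp
  also have "\<dots> = exp ?a * (exp ?b / sqrt (2 * pi * t)) / exp ?d / sqrt ?c"
    unfolding sqrt_split exp_split3' ..
  also have "\<dots> = exp ?a * pBM t y x / exp ?d / sqrt ?c"
    unfolding pBM_def by (simp add: power2_commute)
  finally have "pBM (s - s * cfun s t) x (cfun s t * y) = \<dots>" .
  from solve_aux2[OF this] cp show ?thesis unfolding cfun_def by simp
qed

lemma transDet_BM_trans:
  fixes s t t' :: real
  assumes s: "s > 0" and t: "0 < t" "t < t'"
  shows "transDet N pBM (t' - t) y' y = sqrt (cfun s t * cfun s t') ^ N
     * ((\<Prod>j<N. exp (- (y' j)\<^sup>2 / (2 * (s + t')))) / (\<Prod>k<N. exp (- (y k)\<^sup>2 / (2 * (s + t)))))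
     * transDet N pBM (s * cfun s t - s * cfun s t') (\<lambda>k. cfun s t * y k) (\<lambda>j. cfun s t' * y' j)"
proof -
  let ?q = "sqrt (cfun s t * cfun s t')"
  let ?A = "\<lambda>a b. pBM (s * cfun s t - s * cfun s t') (cfun s t * y a) (cfun s t' * y' b)"
  have "transDet N pBM (t' - t) y' y = detN N (\<lambda>j k. (?q * exp (- (y' j)\<^sup>2 / (2 * (s + t'))))
        * (1 / exp (- (y k)\<^sup>2 / (2 * (s + t)))) * ?A k j)"
    unfolding transDet_def by (rule detN_cong) (simp add: pBM_trans[OF assms])
  also have "\<dots> = (\<Prod>j<N. ?q * exp (- (y' j)\<^sup>2 / (2 * (s + t')))) * (\<Prod>k<N. 1 / exp (- (y k)\<^sup>2 / (2 * (s + t))))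
       * detN N (\<lambda>j k. ?A k j)"
    by (rule detN_scale)
  also have "detN N (\<lambda>j k. ?A k j) = detN N ?A" by (rule detN_transpose)
  finally show ?thesis unfolding transDet_def
    by (simp add: prod.distrib prod_dividef)
qed

lemma transDet_BM_init:
  fixes s t :: real
  assumes s: "s > 0" and t: "0 < t"
  shows "(\<Prod>k<N. exp (- (x k)\<^sup>2 / (2 * s))) * transDet N pBM t y x = sqrt (cfun s t) ^ N
     * (\<Prod>j<N. exp (- (y j)\<^sup>2 / (2 * (s + t))))
     * transDet N pBM (s - s * cfun s t) x (\<lambda>j. cfun s t * y j)"
proof -
  let ?A = "\<lambda>a b. pBM (s - s * cfun s t) (x a) (cfun s t * y b)"
  have "(\<Prod>k<N. exp (- (x k)\<^sup>2 / (2 * s))) * transDet N pBM t y x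
     = (\<Prod>j<N. 1) * (\<Prod>k<N. exp (- (x k)\<^sup>2 / (2 * s))) * transDet N pBM t y x" by simp
  also have "\<dots> = detN N (\<lambda>j k. 1 * exp (- (x k)\<^sup>2 / (2 * s)) * pBM t (y j) (x k))"
    unfolding transDet_def by (rule detN_scale[symmetric])
  also have "\<dots> = detN N (\<lambda>j k. (sqrt (cfun s t) * exp (- (y j)\<^sup>2 / (2 * (s + t)))) * 1 * ?A k j)"
    by (rule detN_cong) (simp only: mult_1_left mult_1_right pBM_init[OF assms])
  also have "\<dots> = (\<Prod>j<N. sqrt (cfun s t) * exp (- (y j)\<^sup>2 / (2 * (s + t)))) * (\<Prod>k<N. 1) * detN N (\<lambda>j k. ?A k j)"
    by (rule detN_scale)
  also have "detN N (\<lambda>j k. ?A k j) = detN N ?A" by (rule detN_transpose)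
  finally show ?thesis unfolding transDet_def
    by (simp add: prod.distrib)
qed

lemma weyl_mono:
  assumes "\<forall>j. Suc j < N \<longrightarrow> x j < x (Suc j)" "j < k" "k < N"
  shows "x j < (x k :: real)"
  using assms(2,3)
proof (induction k)
  case 0 then show ?case by simp
next
  case (Suc k)
  show ?case
  proof (cases "j = k")
    case True then show ?thesis using assms(1) Suc.prems by auto
  next
    case False
    then have "x j < x k" using Suc by auto
    also have "x k < x (Suc k)" using assms(1) Suc.prems by auto
    finally show ?thesis .
  qed
qed

lemma vdm_pos:
  assumes "\<forall>j. Suc j < N \<longrightarrow> x j < x (Suc j)"
  shows "vdm N x > 0"
  unfolding vdm_def
  by (rule prod_pos, rule prod_pos) (use weyl_mono[OF assms] in auto)

lemma vdm_pos_A: "x \<in> weylA N \<Longrightarrow> vdm N x > 0"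
  by (rule vdm_pos) (simp add: weylA_def)

lemma vdm_pos_Plus: "x \<in> weylPlus N \<Longrightarrow> vdm N x > 0"
  by (rule vdm_pos) (simp add: weylPlus_def)

lemma sum_lessThan_real: "(\<Sum>k<N. real k) = real N * (real N - 1) / 2"
  by (induction N) (auto simp: field_simps)

lemma vdm_scale:
  assumes "c > 0"
  shows "vdm N (\<lambda>i. c * y i) = c powr (real N * (real N - 1) / 2) * vdm N y"
proof -
  have "vdm N (\<lambda>i. c * y i) = (\<Prod>k<N. c ^ k * (\<Prod>j<k. y k - y j))"
    unfolding vdm_def by (simp add: right_diff_distrib[symmetric] prod.distrib)
  also have "\<dots> = (\<Prod>k<N. c powr real k) * vdm N y"
    unfolding vdm_def prod.distrib using assms by (simp add: powr_realpow)
  also have "(\<Prod>k<N. c powr real k) = c powr (\<Sum>k<N. real k)"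
    using assms by (simp add: powr_sum)
  finally show ?thesis by (simp add: sum_lessThan_real)
qed

lemma exp_sqnorm: "exp (- sqnorm N x / (2 * s)) = (\<Prod>k<N. exp (- (x k)\<^sup>2 / (2 * s)))"
  unfolding sqnorm_def by (simp add: exp_sum[symmetric] sum_divide_distrib sum_negf)

lemma sqrt_telescope:
  assumes "\<And>m. m \<le> n \<Longrightarrow> c m > (0::real)"
  shows "(\<Prod>m<n. sqrt (c m * c (Suc m))) * sqrt (c 0) * sqrt (c n) = (\<Prod>m<Suc n. c m)"
  using assms
proof (induction n)
  case 0 then show ?case by (simp add: real_sqrt_mult[symmetric] less_imp_le)
next
  case (Suc n)
  have IH: "(\<Prod>m<n. sqrt (c m * c (Suc m))) * sqrt (c 0) * sqrt (c n) = (\<Prod>m<Suc n. c m)"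
    using Suc by auto
  have p: "c (Suc n) > 0" "c n > 0" using Suc.prems by auto
  have "(\<Prod>m<Suc n. sqrt (c m * c (Suc m))) * sqrt (c 0) * sqrt (c (Suc n))
      = ((\<Prod>m<n. sqrt (c m * c (Suc m))) * sqrt (c 0) * sqrt (c n)) * (sqrt (c (Suc n)) * sqrt (c (Suc n)))"
    by (simp add: real_sqrt_mult ac_simps)
  also have "\<dots> = (\<Prod>m<Suc (Suc n). c m)" unfolding IH using p by simp
  finally show ?case .
qed

lemma sqrt_telescope_pow:
  assumes "\<And>m. m \<le> n \<Longrightarrow> c m > (0::real)"
  shows "(\<Prod>m<n. sqrt (c m * c (Suc m)) ^ N) * sqrt (c 0) ^ N = (\<Prod>m<Suc n. c m ^ N) / sqrt (c n) ^ N"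
proof -
  have "sqrt (c n) > 0" using assms by simp
  moreover have eq: "(\<Prod>m<n. sqrt (c m * c (Suc m))) * sqrt (c 0) * sqrt (c n) = (\<Prod>m<Suc n. c m)"
    by (rule sqrt_telescope) (rule assms)
  hence "((\<Prod>m<n. sqrt (c m * c (Suc m))) * sqrt (c 0) * sqrt (c n)) ^ N = (\<Prod>m<Suc n. c m) ^ N"
    by (simp only:)
  ultimately show ?thesis
    by (simp add: power_mult_distrib prod_power_distrib field_simps)
qed

lemma const_GOE:
  assumes s: "s > 0" and c: "c > 0"
  shows "sqrt s powr (- (real N * (real N + 1) / 2)) / CGOE N
       = CBM N s (s * c) * c powr (real N * (real N - 1) / 2) / sqrt (2 * pi * s) ^ N"
proof -
  let ?E = "real N * (real N - 1) / 2"
  let ?P = "\<Prod>j=1..N. Gamma (real j / 2)"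
  have P: "?P > 0" by (rule prod_pos) auto
  have a: "(s * c) powr (- ?E) * c powr ?E = s powr (- ?E)"
    using s c by (simp add: powr_mult powr_minus field_simps)
  have b: "sqrt (2 * pi * s) ^ N = 2 powr (real N / 2) * pi powr (real N / 2) * s powr (real N / 2)"
    using s by (simp add: powr_half_sqrt[symmetric] powr_realpow[symmetric] powr_powr powr_mult)
  have d: "sqrt s powr (- (real N * (real N + 1) / 2)) = s powr (- (real N * (real N + 1) / 4))"
    using s by (simp add: powr_half_sqrt[symmetric] powr_powr)
  have "CBM N s (s * c) * c powr ?E / sqrt (2 * pi * s) ^ N
      = pi powr (real N / 2) / ?P * s powr (real N * (real N - 1) / 4) * ((s * c) powr (- ?E) * c powr ?E)
        / (2 powr (real N / 2) * pi powr (real N / 2) * s powr (real N / 2))"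
    unfolding CBM_def b by (simp add: ac_simps)
  also have "\<dots> = s powr (real N * (real N - 1) / 4) * s powr (- ?E) / s powr (real N / 2) / (2 powr (real N / 2) * ?P)"
    unfolding a using P by (simp add: field_simps)
  also have "\<dots> = s powr (real N * (real N - 1) / 4 - ?E - real N / 2) / (2 powr (real N / 2) * ?P)"
    using s by (simp add: powr_add[symmetric] powr_diff)
  also have "real N * (real N - 1) / 4 - ?E - real N / 2 = - (real N * (real N + 1) / 4)"
    by (simp add: field_simps)
  finally show ?thesis unfolding d CGOE_eq by simp
qed

lemma pBM_final:
  assumes s: "s > 0" and t: "t > 0"
  shows "pBM (s * cfun s t) (cfun s t * y) 0 = exp (- y\<^sup>2 / (2 * (s + t))) / sqrt (2 * pi * (s * cfun s t))"
proof -
  have "- (0 - s / (s + t) * y)\<^sup>2 / (2 * (s * (s / (s + t)))) = - y\<^sup>2 / (2 * (s + t))"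
  proof -
    have "s + t \<noteq> 0" using assms by simp
    then show ?thesis using assms by (simp add: divide_simps power2_eq_square)
  qed
  then show ?thesis unfolding pBM_def cfun_def by simp
qed

lemma set_integral_cong_any:
  assumes "\<And>x. x \<in> A \<Longrightarrow> f x = g x"
  shows "(LINT x:A|M. f x) = (LINT x:A|M. (g x :: real))"
proof -
  have "(\<lambda>x. indicator A x *\<^sub>R f x) = (\<lambda>x. indicator A x *\<^sub>R g x)"
    using assms by (auto simp: indicator_def)
  then show ?thesis unfolding set_lebesgue_integral_def by simp
qed

lemma part1:
  fixes \<sigma>2 :: real
  assumes s: "\<sigma>2 > 0" and M1: "M \<ge> 1" and t0: "0 < ts 0"
    and inc: "\<forall>m. Suc m < M \<longrightarrow> ts m < ts (Suc m)"
  shows "mixedHomDensity N pBM (weylA N) (muGOE N \<sigma>2) M ts xs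
      = timeChangedDensity N \<sigma>2 1 (durDensity N pBM (CBM N \<sigma>2) (weylA N) \<sigma>2) M ts xs"
proof -
  obtain M' where M: "M = Suc M'" using M1 by (cases M) auto
  define c where "c m = cfun \<sigma>2 (ts m)" for m
  define Gp where "Gp m = (\<Prod>i<N. exp (- (xs m i)\<^sup>2 / (2 * (\<sigma>2 + ts m))))" for m
  define f where "f m = transDet N pBM (\<sigma>2 * c m - \<sigma>2 * c (Suc m)) (\<lambda>k. c m * xs m k) (\<lambda>j. c (Suc m) * xs (Suc m) j)" for m
  define TDl where "TDl z = transDet N pBM (\<sigma>2 - \<sigma>2 * c 0) z (\<lambda>j. c 0 * xs 0 j)" for z
  define S where "S = (\<lambda>m. \<sigma>2 * cfun \<sigma>2 (ts (M - 1 - m)))"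
  define X where "X = (\<lambda>m j. cfun \<sigma>2 (ts (M - 1 - m)) ^ 1 * xs (M - 1 - m) j)"
  define E where "E = real N * (real N - 1) / 2"
  have tinc: "ts m < ts (Suc m)" if "m < M'" for m using inc that M by auto
  have tpos: "ts m > 0" if "m \<le> M'" for m
    using that
  proof (induction m)
    case 0 then show ?case using t0 by simp
  next
    case (Suc m) then show ?case using tinc[of m] by auto
  qed
  have cpos: "c m > 0" if "m \<le> M'" for m using tpos[OF that] s by (simp add: c_def cfun_def)
  have Gpos: "Gp m > 0" for m unfolding Gp_def by (rule prod_pos) auto
  have PL: "(\<Prod>m<M'. transDet N pBM (ts (Suc m) - ts m) (xs (Suc m)) (xs m))
      = (\<Prod>m<M'. sqrt (c m * c (Suc m)) ^ N) * (Gp M' / Gp 0) * (\<Prod>m<M'. f m)"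
  proof -
    have "(\<Prod>m<M'. transDet N pBM (ts (Suc m) - ts m) (xs (Suc m)) (xs m))
       = (\<Prod>m<M'. sqrt (c m * c (Suc m)) ^ N * (Gp (Suc m) / Gp m) * f m)"
    proof (rule prod.cong[OF refl])
      fix m assume "m \<in> {..<M'}"
      hence m: "m < M'" by simp
      show "transDet N pBM (ts (Suc m) - ts m) (xs (Suc m)) (xs m) = sqrt (c m * c (Suc m)) ^ N * (Gp (Suc m) / Gp m) * f m"
        unfolding c_def Gp_def f_def
        by (rule transDet_BM_trans[OF s tpos tinc[OF m]]) (use m in simp)
    qed
    also have "\<dots> = (\<Prod>m<M'. sqrt (c m * c (Suc m)) ^ N) * (\<Prod>m<M'. Gp (Suc m) / Gp m) * (\<Prod>m<M'. f m)"
      by (simp only: prod.distrib)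
    also have "(\<Prod>m<M'. Gp (Suc m) / Gp m) = Gp M' / Gp 0"
      by (rule prod_lessThan_telescope) (metis Gpos less_irrefl)
    finally show ?thesis .
  qed
  have PR: "(\<Prod>m<M. transDet N pBM ((if Suc m < M then S (Suc m) else \<sigma>2) - S m)
        (if Suc m < M then X (Suc m) else z) (X m)) = (\<Prod>m<M'. f m) * TDl z" for z
  proof -
    let ?g = "\<lambda>m. transDet N pBM ((if Suc m < M then S (Suc m) else \<sigma>2) - S m)
        (if Suc m < M then X (Suc m) else z) (X m)"
    have split: "(\<Prod>m<M. ?g m) = (\<Prod>m<M'. ?g m) * ?g M'" using M by simp
    have "(\<Prod>m<M'. ?g m) = (\<Prod>m<M'. f (M' - Suc m))"
    proof (rule prod.cong[OF refl])
      fix m assume "m \<in> {..<M'}"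
      hence m: "m < M'" by simp
      have e1: "M - 1 - Suc m = M' - Suc m" "M - 1 - m = Suc (M' - Suc m)" using m M by auto
      show "?g m = f (M' - Suc m)"
        using m M unfolding S_def X_def f_def c_def e1 by simp
    qed
    also have "\<dots> = (\<Prod>m<M'. f m)" by (rule prod.nat_diff_reindex)
    finally have P: "(\<Prod>m<M'. ?g m) = (\<Prod>m<M'. f m)" .
    have "?g M' = TDl z" using M by (simp add: TDl_def S_def X_def c_def)
    then show ?thesis unfolding split P by simp
  qed
  have X0: "X 0 = (\<lambda>j. c M' * xs M' j)" "S 0 = \<sigma>2 * c M'"
    unfolding X_def S_def c_def M by auto
  have Q: "(\<Prod>j<N. pBM (S 0) (X 0 j) 0) = Gp M' / sqrt (2 * pi * (\<sigma>2 * c M')) ^ N"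
    unfolding X0 Gp_def c_def using pBM_final[OF s tpos[of M']]
    by (simp add: prod_dividef)
  have V0: "vdm N (X 0) = c M' powr E * vdm N (xs M')"
    unfolding X0 E_def by (rule vdm_scale[OF cpos]) simp
  have TEL: "(\<Prod>m<M'. sqrt (c m * c (Suc m)) ^ N) * sqrt (c 0) ^ N = (\<Prod>m<M. c m ^ N) / sqrt (c M') ^ N"
    unfolding M by (rule sqrt_telescope_pow) (rule cpos)
  have CST: "sqrt \<sigma>2 powr (- (real N * (real N + 1) / 2)) / CGOE N
       = CBM N \<sigma>2 (\<sigma>2 * c M') * c M' powr E / sqrt (2 * pi * \<sigma>2) ^ N"
    unfolding E_def by (rule const_GOE[OF s cpos]) simp
  have TC: "timeChangedDensity N \<sigma>2 1 (durDensity N pBM (CBM N \<sigma>2) (weylA N) \<sigma>2) M ts xs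
     = (\<Prod>m<M. c m ^ N) * (CBM N \<sigma>2 (S 0) * (LINT z:weylA N|lebN N.
        sgn (vdm N z) * (\<Prod>m<M. transDet N pBM ((if Suc m < M then S (Suc m) else \<sigma>2) - S m)
        (if Suc m < M then X (Suc m) else z) (X m)) * vdm N (X 0) * (\<Prod>j<N. pBM (S 0) (X 0 j) 0)))"
    unfolding timeChangedDensity_def durDensity_def S_def X_def c_def by simp
  let ?K = "sqrt \<sigma>2 powr (- (real N * (real N + 1) / 2)) / CGOE N"
  let ?Cst = "(\<Prod>m<M. c m ^ N) * CBM N \<sigma>2 (S 0)"
  have pw: "muGOE N \<sigma>2 x * homDensity N pBM M ts xs x
     = ?Cst * (sgn (vdm N x) * (\<Prod>m<M. transDet N pBM ((if Suc m < M then S (Suc m) else \<sigma>2) - S m)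
        (if Suc m < M then X (Suc m) else z) (X m)) * vdm N (X 0) * (\<Prod>j<N. pBM (S 0) (X 0 j) 0))"
    if x: "x \<in> weylA N" and z: "z = x" for x z
  proof -
    have vp: "vdm N x > 0" by (rule vdm_pos_A[OF x])
    have init: "(\<Prod>k<N. exp (- (x k)\<^sup>2 / (2 * \<sigma>2))) * transDet N pBM (ts 0) (xs 0) x
        = sqrt (c 0) ^ N * Gp 0 * TDl x"
      unfolding c_def Gp_def TDl_def by (rule transDet_BM_init[OF s t0])
    have "muGOE N \<sigma>2 x * homDensity N pBM M ts xs x
        = ?K * vdm N (xs M') * (\<Prod>m<M'. transDet N pBM (ts (Suc m) - ts m) (xs (Suc m)) (xs m))
          * ((\<Prod>k<N. exp (- (x k)\<^sup>2 / (2 * \<sigma>2))) * transDet N pBM (ts 0) (xs 0) x)"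
      unfolding muGOE_def homDensity_def exp_sqnorm using vp M by (simp add: field_simps)
    also have "\<dots> = ?K * vdm N (xs M') * ((\<Prod>m<M'. sqrt (c m * c (Suc m)) ^ N) * sqrt (c 0) ^ N)
          * (Gp M' / Gp 0) * (\<Prod>m<M'. f m) * Gp 0 * TDl x"
      unfolding PL init by (simp add: ac_simps)
    also have "\<dots> = ?K * vdm N (xs M') * ((\<Prod>m<M. c m ^ N) / sqrt (c M') ^ N)
          * Gp M' * (\<Prod>m<M'. f m) * TDl x"
      unfolding TEL using Gpos[of 0] by (simp add: field_simps)
    also have "\<dots> = ?Cst * (sgn (vdm N x) * (\<Prod>m<M. transDet N pBM ((if Suc m < M then S (Suc m) else \<sigma>2) - S m)
        (if Suc m < M then X (Suc m) else z) (X m)) * vdm N (X 0) * (\<Prod>j<N. pBM (S 0) (X 0 j) 0))"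
    proof -
      have sq: "sqrt (2 * pi * (\<sigma>2 * c M')) ^ N = sqrt (2 * pi * \<sigma>2) ^ N * sqrt (c M') ^ N"
        by (simp add: real_sqrt_mult power_mult_distrib ac_simps)
      have p1: "sqrt (c M') > 0" using cpos[of M'] by simp
      have p2: "sqrt (2 * pi * \<sigma>2) > 0" using s by simp
      show ?thesis
        unfolding PR Q V0 CST unfolding X0(2) z sq using vp p1 p2 by (simp add: field_simps)
    qed
    finally show ?thesis .
  qed
  have "mixedHomDensity N pBM (weylA N) (muGOE N \<sigma>2) M ts xs
      = (LINT x:weylA N|lebN N. ?Cst * (sgn (vdm N x) * (\<Prod>m<M. transDet N pBM ((if Suc m < M then S (Suc m) else \<sigma>2) - S m)
        (if Suc m < M then X (Suc m) else x) (X m)) * vdm N (X 0) * (\<Prod>j<N. pBM (S 0) (X 0 j) 0)))"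
    unfolding mixedHomDensity_def by (rule set_integral_cong_any) (rule pw, auto)
  also have "\<dots> = timeChangedDensity N \<sigma>2 1 (durDensity N pBM (CBM N \<sigma>2) (weylA N) \<sigma>2) M ts xs"
    unfolding TC set_integral_mult_right by (simp add: ac_simps)
  finally show ?thesis .
qed

lemma expo_BES:
  fixes s t t' y y' :: real
  assumes s: "s > 0" and t: "0 < t" "t < t'"
  shows "- ((s/(s+t'))^2 * y' + (s/(s+t))^2 * y) / (2 * ((s/(s+t)) * (s/(s+t')) * (t' - t)))
       = - (y + y') / (2 * (t' - t)) + (- y / (2 * (s + t)) - - y' / (2 * (s + t')))"
proof -
  have "s+t \<noteq> 0" "s+t'\<noteq>0" "t'-t \<noteq> 0" using assms by auto
  then show ?thesis using assms
  apply (simp add: divide_simps power2_eq_square)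
  apply algebra
  done
qed

lemma arg_BES:
  fixes s t t' y y' :: real
  assumes s: "s > 0" and t: "0 < t" "t < t'" and y: "y > 0" "y' > 0"
  shows "sqrt ((s/(s+t'))^2 * y' * ((s/(s+t))^2 * y)) / ((s/(s+t)) * (s/(s+t')) * (t' - t))
       = sqrt (y * y') / (t' - t)"
proof -
  have "sqrt ((s/(s+t'))^2 * y' * ((s/(s+t))^2 * y)) = (s/(s+t)) * (s/(s+t')) * sqrt (y * y')"
    using assms by (simp add: real_sqrt_mult ac_simps)
  then show ?thesis using assms by simp
qed

lemma exp_add_diff: "exp (A + (B - C)) = exp A * exp B / exp (C::real)"
  by (simp add: exp_add exp_diff)

lemma alg1:
  fixes c c' D Pc Pc' Yn Yn' Yr Yr' e0 e1 e2 B :: real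
  assumes "c > 0" "c' > 0" "D > 0" "Pc > 0" "Pc' > 0" "Yn > 0" "Yn' > 0" "Yr > 0" "Yr' > 0" "e1 > 0" "e2 > 0"
  shows "1 / (2 * D) * (Yn' / Yn) * e0 * B = (c * c' * (Pc' ^ 2 / Pc ^ 2)) * ((Yn' * Yr' * e2) / (Yn * Yr * e1))
     * (1 / (2 * (c * c' * D)) * (Pc ^ 2 * Yr / (Pc' ^ 2 * Yr')) * (e0 * e1 / e2) * B)"
  using assms by (simp add: field_simps power2_eq_square)

lemma alg2:
  fixes c t Pc Xn Xr Yn Yr eA e0 eG B :: real
  assumes "c > 0" "t > 0" "Pc > 0" "Xn > 0" "Xr > 0" "Yn > 0" "Yr > 0" "eA > 0" "eG > 0"
  shows "Xn * Xr * eA * (1 / (2 * t) * (Yn / Xn) * e0 * B) = (c * Pc ^ 2) * (Yn * Yr * eG)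
     * (1 / (2 * (c * t)) * (Xr / (Pc ^ 2 * Yr)) * (eA * e0 / eG) * B)"
  using assms by (simp add: field_simps power2_eq_square)

lemma pBES_trans:
  fixes s t t' y y' \<nu> \<kappa> a :: real
  assumes s: "s > 0" and t: "0 < t" "t < t'" and y: "y > 0" "y' > 0" and ka: "\<kappa> = 2 * (\<nu> - a)"
  shows "pBES \<nu> (t' - t) y' y = (cfun s t * cfun s t' * (cfun s t' / cfun s t) powr (\<nu> - \<kappa>))
     * ((y' powr a * exp (- y' / (2 * (s + t')))) / (y powr a * exp (- y / (2 * (s + t)))))
     * pMEA \<nu> \<kappa> (s * cfun s t - s * cfun s t') (cfun s t ^ 2 * y) (cfun s t' ^ 2 * y')"
proof -
  define c where "c = s/(s+t)"
  define c' where "c' = s/(s+t')"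
  define r where "r = (\<nu> - \<kappa>) / 2"
  define B where "B = besselI \<nu> (sqrt (y * y') / (t' - t))"
  define E0 where "E0 = - (y + y') / (2 * (t' - t))"
  define A1 where "A1 = - y / (2 * (s + t))"
  define A2 where "A2 = - y' / (2 * (s + t'))"
  have cp: "c > 0" "c' > 0" using assms by (auto simp: c_def c'_def)
  have D: "t' - t > 0" using t by simp
  have tau: "s * c - s * c' = c * c' * (t' - t)" unfolding c_def c'_def by (rule tau_eq[OF s t])
  have h3: "(c^2 * y / (c'^2 * y')) powr r = (c powr r)^2 * y powr r / ((c' powr r)^2 * y' powr r)"
    by (simp only: powr_mult powr_divide power2_eq_square)
  have h4: "(y' / y) powr (\<nu> / 2) = y' powr (\<nu>/2) / y powr (\<nu>/2)"
    using y by (simp add: powr_divide)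
  have h5: "y' powr a = y' powr (\<nu>/2) * y' powr r" "y powr a = y powr (\<nu>/2) * y powr r"
  proof -
    have "\<nu>/2 + r = a" using ka by (simp add: r_def field_simps)
    then show "y' powr a = y' powr (\<nu>/2) * y' powr r" "y powr a = y powr (\<nu>/2) * y powr r"
      by (simp_all add: powr_add[symmetric])
  qed
  have h6: "(c' / c) powr (\<nu> - \<kappa>) = (c' powr r)^2 / (c powr r)^2"
    using cp by (simp add: powr_divide r_def powr_powr[symmetric] power2_eq_square powr_add[symmetric])
  have pM: "pMEA \<nu> \<kappa> (s * c - s * c') (c ^ 2 * y) (c' ^ 2 * y')
      = 1 / (2 * (c * c' * (t' - t))) * (c^2 * y / (c'^2 * y')) powr r * (exp E0 * exp A1 / exp A2) * B"
  proof -
    have ne: "c' ^ 2 * y' \<noteq> 0" using cp y by simp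
    have ex: "exp (- (c'^2 * y' + c^2 * y) / (2 * (c * c' * (t' - t)))) = exp E0 * exp A1 / exp A2"
      unfolding c_def c'_def E0_def A1_def A2_def expo_BES[OF s t] by (rule exp_add_diff)
    have ar: "sqrt (c'^2 * y' * (c^2 * y)) / (c * c' * (t' - t)) = sqrt (y * y') / (t' - t)"
      unfolding c_def c'_def by (rule arg_BES[OF s t y])
    show ?thesis unfolding pMEA_def tau using ne ex ar by (simp add: B_def r_def)
  qed
  have pB: "pBES \<nu> (t' - t) y' y = 1 / (2 * (t' - t)) * (y' / y) powr (\<nu> / 2) * exp E0 * B"
    using y unfolding pBES_def E0_def B_def by simp
  have "pBES \<nu> (t' - t) y' y = (c * c' * (c' / c) powr (\<nu> - \<kappa>))
     * ((y' powr a * exp A2) / (y powr a * exp A1))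
     * pMEA \<nu> \<kappa> (s * c - s * c') (c ^ 2 * y) (c' ^ 2 * y')"
    unfolding pM pB h3 h4 h5 h6 by (rule alg1) (use cp y D in auto)
  then show ?thesis unfolding c_def c'_def A1_def A2_def cfun_def by simp
qed


lemma expo_BES0:
  fixes s t x y :: real
  assumes s: "s > 0" and t: "0 < t"
  shows "- ((s/(s+t))^2 * y + x) / (2 * ((s/(s+t)) * t))
       = - x / (2 * s) + (- (x + y) / (2 * t) - - y / (2 * (s + t)))"
proof -
  have "s+t \<noteq> 0" using assms by auto
  then show ?thesis using assms
  apply (simp add: divide_simps power2_eq_square)
  apply algebra
  done
qed

lemma pBES_init:
  fixes s t x y \<nu> \<kappa> a :: real
  assumes s: "s > 0" and t: "0 < t" and x: "x \<ge> 0" and y: "y > 0" and ka: "\<kappa> = 2 * (\<nu> - a)"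
  shows "x powr a * exp (- x / (2 * s)) * pBES \<nu> t y x = cfun s t powr (1 + \<nu> - \<kappa>)
     * (y powr a * exp (- y / (2 * (s + t))))
     * pMEA \<nu> \<kappa> (s - s * cfun s t) x (cfun s t ^ 2 * y)"
proof (cases "x = 0")
  case True
  have "cfun s t ^ 2 * y \<noteq> 0" using s t y by (simp add: cfun_def)
  then show ?thesis using True unfolding pMEA_def by simp
next
  case False
  hence xp: "x > 0" using x by simp
  define c where "c = s/(s+t)"
  define r where "r = (\<nu> - \<kappa>) / 2"
  define B where "B = besselI \<nu> (sqrt (x * y) / t)"
  define E0 where "E0 = - (x + y) / (2 * t)"
  define A where "A = - x / (2 * s)"
  define G where "G = - y / (2 * (s + t))"
  have cp: "c > 0" using assms by (auto simp: c_def)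
  have tau: "s - s * c = c * t" using s t unfolding c_def by (simp add: field_simps)
  have h3: "(x / (c^2 * y)) powr r = x powr r / ((c powr r)^2 * y powr r)"
    by (simp only: powr_mult powr_divide power2_eq_square)
  have h4: "(y / x) powr (\<nu> / 2) = y powr (\<nu>/2) / x powr (\<nu>/2)"
    using y xp by (simp add: powr_divide)
  have h5: "y powr a = y powr (\<nu>/2) * y powr r" "x powr a = x powr (\<nu>/2) * x powr r"
  proof -
    have "\<nu>/2 + r = a" using ka by (simp add: r_def field_simps)
    then show "y powr a = y powr (\<nu>/2) * y powr r" "x powr a = x powr (\<nu>/2) * x powr r"
      by (simp_all add: powr_add[symmetric])
  qed
  have h6: "c powr (1 + \<nu> - \<kappa>) = c * (c powr r)^2"
  proof -
    have "(c powr r)^2 = c powr (\<nu> - \<kappa>)" using cp by (simp add: r_def power2_eq_square powr_add[symmetric])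
    moreover have "c powr (1 + \<nu> - \<kappa>) = c * c powr (\<nu> - \<kappa>)"
    proof -
      have "c powr (1 + \<nu> - \<kappa>) = c powr (1 + (\<nu> - \<kappa>))" by (simp add: algebra_simps)
      also have "\<dots> = c powr 1 * c powr (\<nu> - \<kappa>)" by (rule powr_add)
      finally show ?thesis using cp by simp
    qed
    ultimately show ?thesis by simp
  qed
  have pM: "pMEA \<nu> \<kappa> (s - s * c) x (c ^ 2 * y)
      = 1 / (2 * (c * t)) * (x / (c^2 * y)) powr r * (exp A * exp E0 / exp G) * B"
  proof -
    have ne: "c ^ 2 * y \<noteq> 0" using cp y by simp
    have ex: "exp (- (c^2 * y + x) / (2 * (c * t))) = exp A * exp E0 / exp G"
      unfolding c_def A_def E0_def G_def expo_BES0[OF s t] by (rule exp_add_diff)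
    have ar: "sqrt (c^2 * y * x) / (c * t) = sqrt (x * y) / t"
    proof -
      have "sqrt (c^2 * y * x) = c * sqrt (x * y)" using cp by (simp add: real_sqrt_mult ac_simps)
      then show ?thesis using cp t by simp
    qed
    show ?thesis unfolding pMEA_def tau using ne ex ar by (simp add: B_def r_def)
  qed
  have pB: "pBES \<nu> t y x = 1 / (2 * t) * (y / x) powr (\<nu> / 2) * exp E0 * B"
    using False unfolding pBES_def E0_def B_def by simp
  have "x powr a * exp A * pBES \<nu> t y x = c powr (1 + \<nu> - \<kappa>)
     * (y powr a * exp G) * pMEA \<nu> \<kappa> (s - s * c) x (c ^ 2 * y)"
    unfolding pM pB h3 h4 h5 h6 by (rule alg2) (use cp y xp t in auto)
  then show ?thesis unfolding c_def A_def G_def cfun_def by simp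
qed

lemma pMEA_final:
  fixes s t y \<nu> \<kappa> a :: real
  assumes s: "s > 0" and t: "0 < t" and y: "y > 0" and ka: "\<kappa> = 2 * (\<nu> - a)"
  shows "pMEA \<nu> \<kappa> (s * cfun s t) (cfun s t ^ 2 * y) 0
     = cfun s t powr (2 * a) * (y powr a * exp (- y / (2 * (s + t))))
       / ((2 * (s * cfun s t)) powr (\<nu> + 1) * Gamma (\<nu> + 1))"
proof -
  define c where "c = s/(s+t)"
  have cp: "c > 0" using assms by (auto simp: c_def)
  have e: "- (c^2 * y) / (2 * (s * c)) = - y / (2 * (s + t))"
  proof -
    have "c ^ 2 * y / (2 * (s * c)) = c * y / (2 * s)" using cp s by (simp add: power2_eq_square)
    also have "\<dots> = y / (2 * (s + t))" using s t unfolding c_def by simp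
    finally show ?thesis by (simp add: minus_divide_left[symmetric])
  qed
  have p: "(c^2 * y) powr (\<nu> - \<kappa> / 2) = c powr (2 * a) * y powr a"
  proof -
    have q: "\<nu> - \<kappa> / 2 = a" using ka by (simp add: field_simps)
    have "(c^2 * y) powr a = c powr a * c powr a * y powr a"
      by (simp only: powr_mult power2_eq_square)
    also have "c powr a * c powr a = c powr (2 * a)"
      by (simp only: powr_add[symmetric] mult_2)
    finally show ?thesis unfolding q by simp
  qed
  show ?thesis unfolding pMEA_def c_def[symmetric] cfun_def[of s t] e p by simp
qed

lemma const_LOE:
  fixes s c \<nu> a \<kappa> :: real
  assumes s: "s > 0" and c: "c > 0" and nu: "\<nu> > -1" and a: "a > -1" and ka: "\<kappa> = 2 * (\<nu> - a)"
  shows "sqrt s powr (- (real N * ((real N - 1) + 2 * (a + 1)))) / CLOE N a * (c powr (\<nu> - \<kappa> - 1)) ^ N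
       = CMEA N \<nu> \<kappa> s (s * c) * (c ^ 2) powr (real N * (real N - 1) / 2) * (c powr (2 * a)) ^ N
         / ((2 * (s * c)) powr (\<nu> + 1) * Gamma (\<nu> + 1)) ^ N"
proof -
  define PG where "PG = (\<Prod>j=1..N. Gamma (real j / 2) * Gamma (real j / 2 + a + 1 / 2))"
  have PGp: "PG > 0" unfolding PG_def
    by (rule prod_pos) (use a in \<open>auto intro!: mult_pos_pos Gamma_real_pos\<close>)
  have Gp: "Gamma (\<nu> + 1) > 0" using nu by simp
  have prodG: "(\<Prod>j=1..N. Gamma (\<nu> + 1) * Gamma (1 / 2)
                      / (Gamma (real j / 2) * Gamma ((real j + 1 + 2 * \<nu> - \<kappa>) / 2)))
      = Gamma (\<nu> + 1) ^ N * sqrt pi ^ N / PG"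
  proof -
    have ar: "(real j + 1 + 2 * \<nu> - \<kappa>) / 2 = real j / 2 + a + 1 / 2" for j
      using ka by (simp add: field_simps)
    have pc: "(\<Prod>j=1..N. Gamma (real j / 2) * Gamma ((real j + 1 + 2 * \<nu> - \<kappa>) / 2)) = PG"
      unfolding PG_def by (rule prod.cong[OF refl]) (simp only: ar)
    have "(\<Prod>j=1..N. Gamma (\<nu> + 1) * Gamma (1 / 2)
                      / (Gamma (real j / 2) * Gamma ((real j + 1 + 2 * \<nu> - \<kappa>) / 2)))
       = (\<Prod>j=1..N. Gamma (\<nu> + 1) * Gamma (1 / 2)) / (\<Prod>j=1..N. Gamma (real j / 2) * Gamma ((real j + 1 + 2 * \<nu> - \<kappa>) / 2))"
      by (rule prod_dividef)
    then show ?thesis unfolding pc by (simp add: Gamma_one_half_real power_mult_distrib)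
  qed
  have L: "ln (sqrt s powr (- (real N * ((real N - 1) + 2 * (a + 1)))) / CLOE N a * (c powr (\<nu> - \<kappa> - 1)) ^ N)
     = (- (real N * ((real N - 1) + 2 * (a + 1)))) * (ln s / 2)
       - ((real N * ((real N - 1) + 2 * (a + 1)) / 2) * ln 2 + ln PG - real N * ln pi / 2)
       + real N * ((\<nu> - \<kappa> - 1) * ln c)"
    unfolding CLOE_eq PG_def[symmetric] using s c PGp
    by (simp add: ln_mult ln_div ln_powr ln_realpow ln_sqrt)
  have R: "ln (CMEA N \<nu> \<kappa> s (s * c) * (c ^ 2) powr (real N * (real N - 1) / 2) * (c powr (2 * a)) ^ N
         / ((2 * (s * c)) powr (\<nu> + 1) * Gamma (\<nu> + 1)) ^ N)
     = ((real N + \<kappa> - 1) * real N / 2) * ln s + (- ((real N - 1) * real N)) * (ln s + ln c)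
       - (real N * (real N - \<kappa> - 1) / 2) * ln 2
       + (real N * ln (Gamma (\<nu> + 1)) + real N * ln pi / 2 - ln PG)
       + (real N * (real N - 1) / 2) * (2 * ln c) + real N * (2 * a * ln c)
       - real N * ((\<nu> + 1) * (ln 2 + ln s + ln c) + ln (Gamma (\<nu> + 1)))"
    unfolding CMEA_def prodG using s c PGp Gp
    by (simp add: ln_mult ln_div ln_powr ln_realpow ln_sqrt)
  have pos1: "sqrt s powr (- (real N * ((real N - 1) + 2 * (a + 1)))) / CLOE N a * (c powr (\<nu> - \<kappa> - 1)) ^ N > 0"
    unfolding CLOE_eq PG_def[symmetric] using s c PGp by simp
  have pos2: "CMEA N \<nu> \<kappa> s (s * c) * (c ^ 2) powr (real N * (real N - 1) / 2) * (c powr (2 * a)) ^ N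
         / ((2 * (s * c)) powr (\<nu> + 1) * Gamma (\<nu> + 1)) ^ N > 0"
    unfolding CMEA_def prodG using s c PGp Gp by simp
  have "(- (real N * ((real N - 1) + 2 * (a + 1)))) * (ln s / 2)
       - ((real N * ((real N - 1) + 2 * (a + 1)) / 2) * ln 2 + ln PG - real N * ln pi / 2)
       + real N * ((\<nu> - \<kappa> - 1) * ln c)
     = ((real N + \<kappa> - 1) * real N / 2) * ln s + (- ((real N - 1) * real N)) * (ln s + ln c)
       - (real N * (real N - \<kappa> - 1) / 2) * ln 2
       + (real N * ln (Gamma (\<nu> + 1)) + real N * ln pi / 2 - ln PG)
       + (real N * (real N - 1) / 2) * (2 * ln c) + real N * (2 * a * ln c)
       - real N * ((\<nu> + 1) * (ln 2 + ln s + ln c) + ln (Gamma (\<nu> + 1)))"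
    unfolding ka by (simp add: field_simps)
  then show ?thesis using L R pos1 pos2 by (metis ln_inj_iff)
qed

lemma weylPos_pos: "x \<in> weylPos N \<Longrightarrow> i < N \<Longrightarrow> x i > 0"
  unfolding weylPos_def
  by (cases "i = 0") (auto dest: weyl_mono[of N x 0 i])

lemma weylPlus_nonneg: "x \<in> weylPlus N \<Longrightarrow> i < N \<Longrightarrow> x i \<ge> 0"
  unfolding weylPlus_def
  by (cases "i = 0") (auto dest!: weyl_mono[of N x 0 i])

lemma transDet_BES_trans:
  fixes s t t' :: real
  assumes s: "s > 0" and t: "0 < t" "t < t'" and ka: "\<kappa> = 2 * (\<nu> - a)"
    and y: "\<And>i. i < N \<Longrightarrow> y i > 0" and y': "\<And>i. i < N \<Longrightarrow> y' i > 0"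
  shows "transDet N (pBES \<nu>) (t' - t) y' y = (cfun s t * cfun s t' * (cfun s t' / cfun s t) powr (\<nu> - \<kappa>)) ^ N
     * ((\<Prod>j<N. y' j powr a * exp (- y' j / (2 * (s + t')))) / (\<Prod>k<N. y k powr a * exp (- y k / (2 * (s + t)))))
     * transDet N (pMEA \<nu> \<kappa>) (s * cfun s t - s * cfun s t') (\<lambda>k. cfun s t ^ 2 * y k) (\<lambda>j. cfun s t' ^ 2 * y' j)"
proof -
  let ?q = "cfun s t * cfun s t' * (cfun s t' / cfun s t) powr (\<nu> - \<kappa>)"
  let ?A = "\<lambda>a b. pMEA \<nu> \<kappa> (s * cfun s t - s * cfun s t') (cfun s t ^ 2 * y a) (cfun s t' ^ 2 * y' b)"
  have "transDet N (pBES \<nu>) (t' - t) y' y = detN N (\<lambda>j k. (?q * (y' j powr a * exp (- y' j / (2 * (s + t')))))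
        * (1 / (y k powr a * exp (- y k / (2 * (s + t))))) * ?A k j)"
    unfolding transDet_def
  proof (rule detN_cong)
    fix j k assume "j < N" "k < N"
    then show "pBES \<nu> (t' - t) (y' j) (y k) = ?q * (y' j powr a * exp (- y' j / (2 * (s + t'))))
        * (1 / (y k powr a * exp (- y k / (2 * (s + t))))) * ?A k j"
      using pBES_trans[OF s t y[of k] y'[of j] ka] by simp
  qed
  also have "\<dots> = (\<Prod>j<N. ?q * (y' j powr a * exp (- y' j / (2 * (s + t'))))) * (\<Prod>k<N. 1 / (y k powr a * exp (- y k / (2 * (s + t)))))
       * detN N (\<lambda>j k. ?A k j)"
    by (rule detN_scale)
  also have "detN N (\<lambda>j k. ?A k j) = detN N ?A" by (rule detN_transpose)
  finally show ?thesis unfolding transDet_def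
    by (simp add: prod.distrib prod_dividef)
qed

lemma transDet_BES_init:
  fixes s t :: real
  assumes s: "s > 0" and t: "0 < t" and ka: "\<kappa> = 2 * (\<nu> - a)"
    and x: "\<And>i. i < N \<Longrightarrow> x i \<ge> 0" and y: "\<And>i. i < N \<Longrightarrow> y i > 0"
  shows "(\<Prod>k<N. x k powr a * exp (- x k / (2 * s))) * transDet N (pBES \<nu>) t y x
     = (cfun s t powr (1 + \<nu> - \<kappa>)) ^ N
     * (\<Prod>j<N. y j powr a * exp (- y j / (2 * (s + t))))
     * transDet N (pMEA \<nu> \<kappa>) (s - s * cfun s t) x (\<lambda>j. cfun s t ^ 2 * y j)"
proof -
  let ?q = "cfun s t powr (1 + \<nu> - \<kappa>)"
  let ?A = "\<lambda>a b. pMEA \<nu> \<kappa> (s - s * cfun s t) (x a) (cfun s t ^ 2 * y b)"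
  have "(\<Prod>k<N. x k powr a * exp (- x k / (2 * s))) * transDet N (pBES \<nu>) t y x
     = (\<Prod>j<N. 1) * (\<Prod>k<N. x k powr a * exp (- x k / (2 * s))) * transDet N (pBES \<nu>) t y x" by simp
  also have "\<dots> = detN N (\<lambda>j k. 1 * (x k powr a * exp (- x k / (2 * s))) * pBES \<nu> t (y j) (x k))"
    unfolding transDet_def by (rule detN_scale[symmetric])
  also have "\<dots> = detN N (\<lambda>j k. (?q * (y j powr a * exp (- y j / (2 * (s + t))))) * 1 * ?A k j)"
  proof (rule detN_cong)
    fix j k assume "j < N" "k < N"
    then show "1 * (x k powr a * exp (- x k / (2 * s))) * pBES \<nu> t (y j) (x k)
       = (?q * (y j powr a * exp (- y j / (2 * (s + t))))) * 1 * ?A k j"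
      using pBES_init[OF s t x[of k] y[of j] ka] by simp
  qed
  also have "\<dots> = (\<Prod>j<N. ?q * (y j powr a * exp (- y j / (2 * (s + t))))) * (\<Prod>k<N. 1) * detN N (\<lambda>j k. ?A k j)"
    by (rule detN_scale)
  also have "detN N (\<lambda>j k. ?A k j) = detN N ?A" by (rule detN_transpose)
  finally show ?thesis unfolding transDet_def
    by (simp add: prod.distrib)
qed

lemma c_telescope:
  assumes "\<And>m. m \<le> n \<Longrightarrow> c m > (0::real)"
  shows "(\<Prod>m<n. c m * c (Suc m) * (c (Suc m) / c m) powr r) * c 0 powr (1 + r)
       = (\<Prod>m<Suc n. c m ^ 2) * c n powr (r - 1)"
  using assms
proof (induction n)
  case 0
  have "c 0 > 0" using 0 by simp
  then show ?case by (simp add: powr_add powr_diff power2_eq_square)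
next
  case (Suc n)
  have IH: "(\<Prod>m<n. c m * c (Suc m) * (c (Suc m) / c m) powr r) * c 0 powr (1 + r)
       = (\<Prod>m<Suc n. c m ^ 2) * c n powr (r - 1)" using Suc by auto
  have p: "c (Suc n) > 0" "c n > 0" using Suc.prems by auto
  have key: "c n powr (r - 1) * (c n * c (Suc n) * (c (Suc n) / c n) powr r) = c (Suc n) ^ 2 * c (Suc n) powr (r - 1)"
    using p by (simp add: powr_diff powr_divide power2_eq_square field_simps)
  have "(\<Prod>m<Suc n. c m * c (Suc m) * (c (Suc m) / c m) powr r) * c 0 powr (1 + r)
      = ((\<Prod>m<n. c m * c (Suc m) * (c (Suc m) / c m) powr r) * c 0 powr (1 + r)) * (c n * c (Suc n) * (c (Suc n) / c n) powr r)"
    by (simp add: ac_simps)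
  also have "\<dots> = (\<Prod>m<Suc n. c m ^ 2) * (c n powr (r - 1) * (c n * c (Suc n) * (c (Suc n) / c n) powr r))"
    unfolding IH by (simp add: ac_simps)
  also have "\<dots> = (\<Prod>m<Suc (Suc n). c m ^ 2) * c (Suc n) powr (r - 1)"
    unfolding key by (simp add: ac_simps)
  finally show ?case .
qed

lemma part2:
  fixes \<sigma>2 \<nu> a \<kappa> :: real
  assumes s: "\<sigma>2 > 0" and nu: "\<nu> > -1" and a: "-1 < a" and ka: "\<kappa> = 2 * (\<nu> - a)"
    and M1: "M \<ge> 1" and t0: "0 < ts 0"
    and inc: "\<forall>m. Suc m < M \<longrightarrow> ts m < ts (Suc m)"
    and xsW: "\<forall>m<M. xs m \<in> weylPos N"
  shows "mixedHomDensity N (pBES \<nu>) (weylPlus N) (muLOE N \<sigma>2 a) M ts xs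
      = timeChangedDensity N \<sigma>2 2
          (durDensity N (pMEA \<nu> \<kappa>) (CMEA N \<nu> \<kappa> \<sigma>2) (weylPlus N) \<sigma>2) M ts xs"
proof -
  obtain M' where M: "M = Suc M'" using M1 by (cases M) auto
  define c where "c m = cfun \<sigma>2 (ts m)" for m
  define H where "H m = (\<Prod>i<N. xs m i powr a * exp (- xs m i / (2 * (\<sigma>2 + ts m))))" for m
  define f where "f m = transDet N (pMEA \<nu> \<kappa>) (\<sigma>2 * c m - \<sigma>2 * c (Suc m)) (\<lambda>k. c m ^ 2 * xs m k) (\<lambda>j. c (Suc m) ^ 2 * xs (Suc m) j)" for m
  define TDl where "TDl z = transDet N (pMEA \<nu> \<kappa>) (\<sigma>2 - \<sigma>2 * c 0) z (\<lambda>j. c 0 ^ 2 * xs 0 j)" for z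
  define S where "S = (\<lambda>m. \<sigma>2 * cfun \<sigma>2 (ts (M - 1 - m)))"
  define X where "X = (\<lambda>m j. cfun \<sigma>2 (ts (M - 1 - m)) ^ 2 * xs (M - 1 - m) j)"
  define E where "E = real N * (real N - 1) / 2"
  define D where "D = (2 * (\<sigma>2 * c M')) powr (\<nu> + 1) * Gamma (\<nu> + 1)"
  have tinc: "ts m < ts (Suc m)" if "m < M'" for m using inc that M by auto
  have tpos: "ts m > 0" if "m \<le> M'" for m
    using that
  proof (induction m)
    case 0 then show ?case using t0 by simp
  next
    case (Suc m) then show ?case using tinc[of m] by auto
  qed
  have cpos: "c m > 0" if "m \<le> M'" for m using tpos[OF that] s by (simp add: c_def cfun_def)
  have xpos: "xs m i > 0" if "m \<le> M'" "i < N" for m i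
  proof -
    have "xs m \<in> weylPos N" using xsW that M by auto
    then show ?thesis using weylPos_pos that by blast
  qed
  have Hpos: "H m > 0" if "m \<le> M'" for m
  proof -
    have "0 < xs m i powr a * exp (- xs m i / (2 * (\<sigma>2 + ts m)))" if "i < N" for i
      using xpos[OF \<open>m \<le> M'\<close> that] by simp
    then show ?thesis unfolding H_def by (intro prod_pos) auto
  qed
  have Dpos: "D > 0" unfolding D_def using s cpos[of M'] nu by simp
  have PL: "(\<Prod>m<M'. transDet N (pBES \<nu>) (ts (Suc m) - ts m) (xs (Suc m)) (xs m))
      = (\<Prod>m<M'. (c m * c (Suc m) * (c (Suc m) / c m) powr (\<nu> - \<kappa>)) ^ N) * (H M' / H 0) * (\<Prod>m<M'. f m)"
  proof -
    have "(\<Prod>m<M'. transDet N (pBES \<nu>) (ts (Suc m) - ts m) (xs (Suc m)) (xs m))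
       = (\<Prod>m<M'. (c m * c (Suc m) * (c (Suc m) / c m) powr (\<nu> - \<kappa>)) ^ N * (H (Suc m) / H m) * f m)"
    proof (rule prod.cong[OF refl])
      fix m assume "m \<in> {..<M'}"
      hence m: "m < M'" by simp
      show "transDet N (pBES \<nu>) (ts (Suc m) - ts m) (xs (Suc m)) (xs m)
          = (c m * c (Suc m) * (c (Suc m) / c m) powr (\<nu> - \<kappa>)) ^ N * (H (Suc m) / H m) * f m"
        unfolding c_def H_def f_def
        by (rule transDet_BES_trans[OF s tpos tinc[OF m] ka]) (use m xpos in auto)
    qed
    also have "\<dots> = (\<Prod>m<M'. (c m * c (Suc m) * (c (Suc m) / c m) powr (\<nu> - \<kappa>)) ^ N) * (\<Prod>m<M'. H (Suc m) / H m) * (\<Prod>m<M'. f m)"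
      by (simp only: prod.distrib)
    also have "(\<Prod>m<M'. H (Suc m) / H m) = H M' / H 0"
      by (rule prod_lessThan_telescope) (metis Hpos less_irrefl)
    finally show ?thesis .
  qed
  have PR: "(\<Prod>m<M. transDet N (pMEA \<nu> \<kappa>) ((if Suc m < M then S (Suc m) else \<sigma>2) - S m)
        (if Suc m < M then X (Suc m) else z) (X m)) = (\<Prod>m<M'. f m) * TDl z" for z
  proof -
    let ?g = "\<lambda>m. transDet N (pMEA \<nu> \<kappa>) ((if Suc m < M then S (Suc m) else \<sigma>2) - S m)
        (if Suc m < M then X (Suc m) else z) (X m)"
    have split: "(\<Prod>m<M. ?g m) = (\<Prod>m<M'. ?g m) * ?g M'" using M by simp
    have "(\<Prod>m<M'. ?g m) = (\<Prod>m<M'. f (M' - Suc m))"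
    proof (rule prod.cong[OF refl])
      fix m assume "m \<in> {..<M'}"
      hence m: "m < M'" by simp
      have e1: "M - 1 - Suc m = M' - Suc m" "M - 1 - m = Suc (M' - Suc m)" using m M by auto
      show "?g m = f (M' - Suc m)"
        using m M unfolding S_def X_def f_def c_def e1 by simp
    qed
    also have "\<dots> = (\<Prod>m<M'. f m)" by (rule prod.nat_diff_reindex)
    finally have P: "(\<Prod>m<M'. ?g m) = (\<Prod>m<M'. f m)" .
    have "?g M' = TDl z" using M by (simp add: TDl_def S_def X_def c_def)
    then show ?thesis unfolding split P by simp
  qed
  have X0: "X 0 = (\<lambda>j. c M' ^ 2 * xs M' j)" "S 0 = \<sigma>2 * c M'"
    unfolding X_def S_def c_def M by auto
  have Q: "(\<Prod>j<N. pMEA \<nu> \<kappa> (S 0) (X 0 j) 0) = (c M' powr (2 * a)) ^ N * H M' / D ^ N"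
  proof -
    have "(\<Prod>j<N. pMEA \<nu> \<kappa> (S 0) (X 0 j) 0)
        = (\<Prod>j<N. c M' powr (2 * a) * (xs M' j powr a * exp (- xs M' j / (2 * (\<sigma>2 + ts M')))) / D)"
    proof (rule prod.cong[OF refl])
      fix j assume "j \<in> {..<N}"
      then show "pMEA \<nu> \<kappa> (S 0) (X 0 j) 0 = c M' powr (2 * a) * (xs M' j powr a * exp (- xs M' j / (2 * (\<sigma>2 + ts M')))) / D"
        unfolding X0 D_def c_def using pMEA_final[OF s tpos[of M'] xpos[of M' j] ka] by simp
    qed
    also have "\<dots> = (c M' powr (2 * a)) ^ N * H M' / D ^ N"
      unfolding H_def by (simp add: prod_dividef prod.distrib)
    finally show ?thesis .
  qed
  have V0: "vdm N (X 0) = (c M' ^ 2) powr E * vdm N (xs M')"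
    unfolding X0 E_def by (rule vdm_scale) (use cpos[of M'] in simp)
  have TEL: "(\<Prod>m<M'. (c m * c (Suc m) * (c (Suc m) / c m) powr (\<nu> - \<kappa>)) ^ N) * (c 0 powr (1 + \<nu> - \<kappa>)) ^ N
      = (\<Prod>m<M. c m ^ (2 * N)) * (c M' powr (\<nu> - \<kappa> - 1)) ^ N"
  proof -
    have e: "1 + (\<nu> - \<kappa>) = 1 + \<nu> - \<kappa>" by simp
    have "(\<Prod>m<M'. c m * c (Suc m) * (c (Suc m) / c m) powr (\<nu> - \<kappa>)) * c 0 powr (1 + (\<nu> - \<kappa>))
       = (\<Prod>m<Suc M'. c m ^ 2) * c M' powr (\<nu> - \<kappa> - 1)"
      by (rule c_telescope) (rule cpos)
    hence "((\<Prod>m<M'. c m * c (Suc m) * (c (Suc m) / c m) powr (\<nu> - \<kappa>)) * c 0 powr (1 + \<nu> - \<kappa>)) ^ N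
       = ((\<Prod>m<Suc M'. c m ^ 2) * c M' powr (\<nu> - \<kappa> - 1)) ^ N" unfolding e by simp
    then show ?thesis unfolding M by (simp add: power_mult_distrib prod_power_distrib power_mult)
  qed
  have CST: "sqrt \<sigma>2 powr (- (real N * ((real N - 1) + 2 * (a + 1)))) / CLOE N a * (c M' powr (\<nu> - \<kappa> - 1)) ^ N
       = CMEA N \<nu> \<kappa> \<sigma>2 (\<sigma>2 * c M') * (c M' ^ 2) powr E * (c M' powr (2 * a)) ^ N / D ^ N"
    unfolding E_def D_def power_mult_distrib[symmetric]
    by (rule const_LOE[OF s cpos nu a ka]) simp
  have TC: "timeChangedDensity N \<sigma>2 2 (durDensity N (pMEA \<nu> \<kappa>) (CMEA N \<nu> \<kappa> \<sigma>2) (weylPlus N) \<sigma>2) M ts xs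
     = (\<Prod>m<M. c m ^ (2 * N)) * (CMEA N \<nu> \<kappa> \<sigma>2 (S 0) * (LINT z:weylPlus N|lebN N.
        sgn (vdm N z) * (\<Prod>m<M. transDet N (pMEA \<nu> \<kappa>) ((if Suc m < M then S (Suc m) else \<sigma>2) - S m)
        (if Suc m < M then X (Suc m) else z) (X m)) * vdm N (X 0) * (\<Prod>j<N. pMEA \<nu> \<kappa> (S 0) (X 0 j) 0)))"
    unfolding timeChangedDensity_def durDensity_def S_def X_def c_def by simp
  let ?K = "sqrt \<sigma>2 powr (- (real N * ((real N - 1) + 2 * (a + 1)))) / CLOE N a"
  let ?Cst = "(\<Prod>m<M. c m ^ (2 * N)) * CMEA N \<nu> \<kappa> \<sigma>2 (S 0)"
  have pw: "muLOE N \<sigma>2 a x * homDensity N (pBES \<nu>) M ts xs x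
     = ?Cst * (sgn (vdm N x) * (\<Prod>m<M. transDet N (pMEA \<nu> \<kappa>) ((if Suc m < M then S (Suc m) else \<sigma>2) - S m)
        (if Suc m < M then X (Suc m) else x) (X m)) * vdm N (X 0) * (\<Prod>j<N. pMEA \<nu> \<kappa> (S 0) (X 0 j) 0))"
    if x: "x \<in> weylPlus N" for x
  proof -
    have vp: "vdm N x > 0" by (rule vdm_pos_Plus[OF x])
    have init: "(\<Prod>k<N. x k powr a * exp (- x k / (2 * \<sigma>2))) * transDet N (pBES \<nu>) (ts 0) (xs 0) x
        = (c 0 powr (1 + \<nu> - \<kappa>)) ^ N * H 0 * TDl x"
      unfolding c_def H_def TDl_def
      by (rule transDet_BES_init[OF s t0 ka]) (use weylPlus_nonneg[OF x] xpos in auto)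
    have "muLOE N \<sigma>2 a x * homDensity N (pBES \<nu>) M ts xs x
        = ?K * vdm N (xs M') * (\<Prod>m<M'. transDet N (pBES \<nu>) (ts (Suc m) - ts m) (xs (Suc m)) (xs m))
          * ((\<Prod>k<N. x k powr a * exp (- x k / (2 * \<sigma>2))) * transDet N (pBES \<nu>) (ts 0) (xs 0) x)"
      unfolding muLOE_def homDensity_def using vp M by (simp add: field_simps)
    also have "\<dots> = ?K * vdm N (xs M') * ((\<Prod>m<M'. (c m * c (Suc m) * (c (Suc m) / c m) powr (\<nu> - \<kappa>)) ^ N) * (c 0 powr (1 + \<nu> - \<kappa>)) ^ N)
          * (H M' / H 0) * (\<Prod>m<M'. f m) * H 0 * TDl x"
      unfolding PL init by (simp add: ac_simps)
    also have "\<dots> = (?K * (c M' powr (\<nu> - \<kappa> - 1)) ^ N) * vdm N (xs M') * (\<Prod>m<M. c m ^ (2 * N))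
          * H M' * (\<Prod>m<M'. f m) * TDl x"
      unfolding TEL using Hpos[of 0] by (simp add: field_simps)
    also have "\<dots> = ?Cst * (sgn (vdm N x) * (\<Prod>m<M. transDet N (pMEA \<nu> \<kappa>) ((if Suc m < M then S (Suc m) else \<sigma>2) - S m)
        (if Suc m < M then X (Suc m) else x) (X m)) * vdm N (X 0) * (\<Prod>j<N. pMEA \<nu> \<kappa> (S 0) (X 0 j) 0))"
      unfolding CST PR Q V0 unfolding X0(2) using vp Dpos by (simp add: field_simps)
    finally show ?thesis .
  qed
  have "mixedHomDensity N (pBES \<nu>) (weylPlus N) (muLOE N \<sigma>2 a) M ts xs
      = (LINT x:weylPlus N|lebN N. ?Cst * (sgn (vdm N x) * (\<Prod>m<M. transDet N (pMEA \<nu> \<kappa>) ((if Suc m < M then S (Suc m) else \<sigma>2) - S m)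
        (if Suc m < M then X (Suc m) else x) (X m)) * vdm N (X 0) * (\<Prod>j<N. pMEA \<nu> \<kappa> (S 0) (X 0 j) 0)))"
    unfolding mixedHomDensity_def by (rule set_integral_cong_any) (rule pw)
  also have "\<dots> = timeChangedDensity N \<sigma>2 2 (durDensity N (pMEA \<nu> \<kappa>) (CMEA N \<nu> \<kappa> \<sigma>2) (weylPlus N) \<sigma>2) M ts xs"
    unfolding TC set_integral_mult_right by (simp add: ac_simps)
  finally show ?thesis .
qed

theorem lemma2p1:
  fixes N :: nat and \<sigma>2 :: real
  assumes "N \<ge> 1" and "\<sigma>2 > 0"
  shows
   "(\<forall>M ts xs. M \<ge> 1 \<and> 0 < ts 0 \<and> (\<forall>m. Suc m < M \<longrightarrow> ts m < ts (Suc m))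
        \<and> (\<forall>m<M. xs m \<in> weylA N) \<longrightarrow>
      mixedHomDensity N pBM (weylA N) (muGOE N \<sigma>2) M ts xs
      = timeChangedDensity N \<sigma>2 1 (durDensity N pBM (CBM N \<sigma>2) (weylA N) \<sigma>2) M ts xs)
    \<and>
    (\<forall>\<nu> a \<kappa>. \<nu> > -1 \<and> -1 < a \<and> a \<le> \<nu> \<and> \<kappa> = 2 * (\<nu> - a) \<longrightarrow>
     (\<forall>M ts xs. M \<ge> 1 \<and> 0 < ts 0 \<and> (\<forall>m. Suc m < M \<longrightarrow> ts m < ts (Suc m))
        \<and> (\<forall>m<M. xs m \<in> weylPos N) \<longrightarrow>
      mixedHomDensity N (pBES \<nu>) (weylPlus N) (muLOE N \<sigma>2 a) M ts xs
      = timeChangedDensity N \<sigma>2 2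
          (durDensity N (pMEA \<nu> \<kappa>) (CMEA N \<nu> \<kappa> \<sigma>2) (weylPlus N) \<sigma>2) M ts xs))"
proof (intro conjI allI impI)
  fix M :: nat and ts :: "nat \<Rightarrow> real" and xs :: "nat \<Rightarrow> nat \<Rightarrow> real"
  assume h: "M \<ge> 1 \<and> 0 < ts 0 \<and> (\<forall>m. Suc m < M \<longrightarrow> ts m < ts (Suc m)) \<and> (\<forall>m<M. xs m \<in> weylA N)"
  show "mixedHomDensity N pBM (weylA N) (muGOE N \<sigma>2) M ts xs
      = timeChangedDensity N \<sigma>2 1 (durDensity N pBM (CBM N \<sigma>2) (weylA N) \<sigma>2) M ts xs"
    by (rule part1) (use h assms(2) in auto)
next
  fix \<nu> a \<kappa> :: real and M :: nat and ts :: "nat \<Rightarrow> real" and xs :: "nat \<Rightarrow> nat \<Rightarrow> real"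
  assume h1: "\<nu> > -1 \<and> -1 < a \<and> a \<le> \<nu> \<and> \<kappa> = 2 * (\<nu> - a)"
  assume h: "M \<ge> 1 \<and> 0 < ts 0 \<and> (\<forall>m. Suc m < M \<longrightarrow> ts m < ts (Suc m)) \<and> (\<forall>m<M. xs m \<in> weylPos N)"
  show "mixedHomDensity N (pBES \<nu>) (weylPlus N) (muLOE N \<sigma>2 a) M ts xs
      = timeChangedDensity N \<sigma>2 2
          (durDensity N (pMEA \<nu> \<kappa>) (CMEA N \<nu> \<kappa> \<sigma>2) (weylPlus N) \<sigma>2) M ts xs"
    by (rule part2) (use h h1 assms(2) in auto)
qed

end
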